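(* There is a family of instances of problem MR, one for each number of jobs $n$, for which $\frac{OPT_{\mathrm{FCFS}}}{OPT}=\Omega(n)$, where $OPT$ is the optimal objective value of MR and $OPT_{\mathrm{FCFS}}$ is the optimal objective value of MR restricted to the FCFS order.
   Context: Problem MR. There are jobs $\mathcal J=\{1,\dots,n\}$ and processors $\mathcal P=\{1,\dots,m\}$. Job $j$ has weight $w_j>0$, release date $r_j\ge0$, and a nonempty set of Map tasks and a nonempty set of Reduce tasks, preassigned to processors with at most one task of each job per processor; $T_{i,j}$ is the task of job $j$ on processor $i$, with work $v_{i,j}\ge0$. A schedule gives each task a start time and a constant speed $s_{i,j}>0$; the task runs non-preemptively for $v_{i,j}/s_{i,j}$ time units and uses energy $v_{i,j}s_{i,j}^{\beta-1}$, where $\beta>1$ is a fixed constant. Feasibility: each processor runs at most one task at a time; tasks of job $j$ start no earlier than $r_j$; Reduce tasks of job $j$ start only after all Map tasks of job $j$ complete; total energy at most a given budget $E>0$. $C_j$ is the maximum completion time of the tasks of job $j$; the objective is to minimize $\sum_j w_jC_j$. Given an order $\sigma$ of the jobs, MR restricted to $\sigma$ is MR with the additional requirement that on every processor the tasks are executed in the order $\sigma$ of their jobs (the same order for all processors). The FCFS order is any order $\sigma$ such that $r_j<r_{j'}$ implies $j$ precedes $j'$. *)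

theory Defs
  imports Complex_Main
begin

text \<open>Jobs are 0..<n, processors are 0..<m.
  task I i j = Some MapT / Some RedT / None says whether job j has a Map task,
  a Reduce task, or no task on processor i (at most one task per job per processor).\<close>

datatype ttype = MapT | RedT

record mr_inst =
  n_jobs  :: nat
  n_procs :: nat
  weight  :: "nat \<Rightarrow> real"
  release :: "nat \<Rightarrow> real"
  task    :: "nat \<Rightarrow> nat \<Rightarrow> ttype option"
  work    :: "nat \<Rightarrow> nat \<Rightarrow> real"
  budget  :: real

definition tasks :: "mr_inst \<Rightarrow> (nat \<times> nat) set" where
  "tasks I = {(i, j). i < n_procs I \<and> j < n_jobs I \<and> task I i j \<noteq> None}"

definition valid_inst :: "mr_inst \<Rightarrow> bool" where
  "valid_inst I \<longleftrightarrow> budget I > 0 \<and>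
     (\<forall>j < n_jobs I. weight I j > 0 \<and> release I j \<ge> 0 \<and>
        (\<exists>i < n_procs I. task I i j = Some MapT) \<and>
        (\<exists>i < n_procs I. task I i j = Some RedT)) \<and>
     (\<forall>i j. (i, j) \<in> tasks I \<longrightarrow> work I i j \<ge> 0)"

definition compl :: "mr_inst \<Rightarrow> (nat \<Rightarrow> nat \<Rightarrow> real) \<Rightarrow> (nat \<Rightarrow> nat \<Rightarrow> real) \<Rightarrow> nat \<Rightarrow> nat \<Rightarrow> real" where
  "compl I st sp i j = st i j + work I i j / sp i j"

definition energy :: "real \<Rightarrow> mr_inst \<Rightarrow> (nat \<Rightarrow> nat \<Rightarrow> real) \<Rightarrow> real" where
  "energy \<beta> I sp = (\<Sum>(i, j)\<in>tasks I. work I i j * sp i j powr (\<beta> - 1))"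

definition feasible :: "real \<Rightarrow> mr_inst \<Rightarrow> (nat \<Rightarrow> nat \<Rightarrow> real) \<Rightarrow> (nat \<Rightarrow> nat \<Rightarrow> real) \<Rightarrow> bool" where
  "feasible \<beta> I st sp \<longleftrightarrow>
     (\<forall>(i, j)\<in>tasks I. sp i j > 0 \<and> st i j \<ge> release I j) \<and>
     (\<forall>i j j'. (i, j) \<in> tasks I \<and> (i, j') \<in> tasks I \<and> j \<noteq> j' \<longrightarrow>
         compl I st sp i j \<le> st i j' \<or> compl I st sp i j' \<le> st i j) \<and>
     (\<forall>i i' j. (i, j) \<in> tasks I \<and> task I i j = Some RedT \<and> (i', j) \<in> tasks I \<and>
         task I i' j = Some MapT \<longrightarrow> compl I st sp i' j \<le> st i j) \<and>
     energy \<beta> I sp \<le> budget I"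

definition job_compl :: "mr_inst \<Rightarrow> (nat \<Rightarrow> nat \<Rightarrow> real) \<Rightarrow> (nat \<Rightarrow> nat \<Rightarrow> real) \<Rightarrow> nat \<Rightarrow> real" where
  "job_compl I st sp j = Max {compl I st sp i j | i. (i, j) \<in> tasks I}"

definition objective :: "mr_inst \<Rightarrow> (nat \<Rightarrow> nat \<Rightarrow> real) \<Rightarrow> (nat \<Rightarrow> nat \<Rightarrow> real) \<Rightarrow> real" where
  "objective I st sp = (\<Sum>j<n_jobs I. weight I j * job_compl I st sp j)"

text \<open>An order of the jobs is given by a position map pos (a bijection of 0..<n);
  job j precedes job j' iff pos j < pos j'.\<close>

definition is_order :: "mr_inst \<Rightarrow> (nat \<Rightarrow> nat) \<Rightarrow> bool" where
  "is_order I pos \<longleftrightarrow> bij_betw pos {..<n_jobs I} {..<n_jobs I}"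

definition respects_order :: "mr_inst \<Rightarrow> (nat \<Rightarrow> nat) \<Rightarrow> (nat \<Rightarrow> nat \<Rightarrow> real) \<Rightarrow> (nat \<Rightarrow> nat \<Rightarrow> real) \<Rightarrow> bool" where
  "respects_order I pos st sp \<longleftrightarrow>
     (\<forall>i j j'. (i, j) \<in> tasks I \<and> (i, j') \<in> tasks I \<and> pos j < pos j' \<longrightarrow>
        compl I st sp i j \<le> st i j')"

definition fcfs_order :: "mr_inst \<Rightarrow> (nat \<Rightarrow> nat) \<Rightarrow> bool" where
  "fcfs_order I pos \<longleftrightarrow> is_order I pos \<and>
     (\<forall>j < n_jobs I. \<forall>j' < n_jobs I. release I j < release I j' \<longrightarrow> pos j < pos j')"

definition OPT :: "real \<Rightarrow> mr_inst \<Rightarrow> real" where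
  "OPT \<beta> I = Inf {objective I st sp | st sp. feasible \<beta> I st sp}"

text \<open>Optimum of MR restricted to an FCFS order (best over all FCFS orders, in case of ties).\<close>

definition OPT_FCFS :: "real \<Rightarrow> mr_inst \<Rightarrow> real" where
  "OPT_FCFS \<beta> I = Inf {objective I st sp | st sp. feasible \<beta> I st sp \<and>
       (\<exists>pos. fcfs_order I pos \<and> respects_order I pos st sp)}"

end

theory Submission
  imports Defs
begin

definition ex_inst :: "nat \<Rightarrow> mr_inst" where
  "ex_inst n = \<lparr> n_jobs = n, n_procs = 2, weight = (\<lambda>j. 1),
     release = (\<lambda>j. if j = 0 then 0 else 1 / real n),
     task = (\<lambda>i j. if i = 0 then Some MapT else if i = 1 then Some RedT else None),
     work = (\<lambda>i j. if i = 0 \<and> j = 0 then 1 else 0), budget = 1 \<rparr>"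

lemma ex_simps:
  "n_jobs (ex_inst n) = n" "n_procs (ex_inst n) = 2" "weight (ex_inst n) = (\<lambda>j. 1)"
  "release (ex_inst n) = (\<lambda>j. if j = 0 then 0 else 1 / real n)"
  "task (ex_inst n) = (\<lambda>i j. if i = 0 then Some MapT else if i = 1 then Some RedT else None)"
  "work (ex_inst n) = (\<lambda>i j. if i = 0 \<and> j = 0 then 1 else 0)" "budget (ex_inst n) = 1"
  by (simp_all add: ex_inst_def)

lemma finite_tasks: "finite (tasks I)"
proof -
  have "tasks I \<subseteq> {..<n_procs I} \<times> {..<n_jobs I}" by (auto simp: tasks_def)
  thus ?thesis by (rule finite_subset) auto
qed

lemma job_compl_ge:
  assumes "(i, j) \<in> tasks I"
  shows "compl I st sp i j \<le> job_compl I st sp j"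
proof -
  have "{compl I st sp i j | i. (i, j) \<in> tasks I} \<subseteq> (\<lambda>i. compl I st sp i j) ` {..<n_procs I}"
    by (auto simp: tasks_def)
  hence "finite {compl I st sp i j | i. (i, j) \<in> tasks I}" by (rule finite_subset) auto
  thus ?thesis unfolding job_compl_def using assms by (intro Max_ge) auto
qed

lemma job_compl_le:
  assumes "(i0, j) \<in> tasks I" "\<And>i. (i, j) \<in> tasks I \<Longrightarrow> compl I st sp i j \<le> B"
  shows "job_compl I st sp j \<le> B"
proof -
  have "{compl I st sp i j | i. (i, j) \<in> tasks I} \<subseteq> (\<lambda>i. compl I st sp i j) ` {..<n_procs I}"
    by (auto simp: tasks_def)
  hence "finite {compl I st sp i j | i. (i, j) \<in> tasks I}" by (rule finite_subset) auto
  thus ?thesis unfolding job_compl_def using assms by (subst Max_le_iff) auto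
qed

lemma tasks_ex: "tasks (ex_inst n) = {(i, j). i < 2 \<and> j < n}"
  by (auto simp: tasks_def ex_inst_def)

lemma compl_nonneg:
  assumes "feasible \<beta> (ex_inst n) st sp" "(i, j) \<in> tasks (ex_inst n)"
  shows "0 \<le> compl (ex_inst n) st sp i j"
proof -
  have "sp i j > 0" "st i j \<ge> release (ex_inst n) j"
    using assms unfolding feasible_def by auto
  moreover have "release (ex_inst n) j \<ge> 0" by (simp add: ex_inst_def)
  moreover have "work (ex_inst n) i j \<ge> 0" by (simp add: ex_inst_def)
  ultimately show ?thesis unfolding compl_def by simp
qed

lemma job_compl_nonneg:
  assumes "feasible \<beta> (ex_inst n) st sp" "j < n"
  shows "0 \<le> job_compl (ex_inst n) st sp j"
proof -
  have t: "(0, j) \<in> tasks (ex_inst n)" using assms by (simp add: tasks_ex)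
  show ?thesis using compl_nonneg[OF assms(1) t] job_compl_ge[OF t, of st sp] by linarith
qed

lemma main_lb:
  assumes "\<beta> > 1" "feasible \<beta> (ex_inst n) st sp" "0 < n"
  shows "1 \<le> compl (ex_inst n) st sp 0 0"
proof -
  let ?I = "ex_inst n"
  have t: "(0, 0) \<in> tasks ?I" using assms by (simp add: tasks_ex)
  have sp: "sp 0 0 > 0" "st 0 0 \<ge> 0"
    using assms t unfolding feasible_def by (auto simp: ex_inst_def)
  have "(\<lambda>(i, j). work ?I i j * sp i j powr (\<beta> - 1)) (0, 0) \<le> energy \<beta> ?I sp"
    unfolding energy_def
    by (rule member_le_sum[OF t]) (auto simp: ex_inst_def finite_tasks)
  also have "\<dots> \<le> 1" using assms unfolding feasible_def by (simp add: ex_inst_def)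
  finally have e: "sp 0 0 powr (\<beta> - 1) \<le> 1" by (simp add: ex_inst_def)
  have "sp 0 0 \<le> 1"
  proof (rule ccontr)
    assume "\<not> sp 0 0 \<le> 1"
    hence "1 < sp 0 0 powr (\<beta> - 1)" using assms(1) by (intro gr_one_powr) auto
    with e show False by simp
  qed
  hence h: "1 \<le> 1 / sp 0 0" using sp by simp
  have "compl ?I st sp 0 0 = st 0 0 + 1 / sp 0 0" unfolding compl_def by (simp add: ex_inst_def)
  thus ?thesis using h sp by linarith
qed

lemma obj_lb:
  assumes "\<beta> > 1" "feasible \<beta> (ex_inst n) st sp" "0 < n"
  shows "1 \<le> objective (ex_inst n) st sp"
proof -
  let ?I = "ex_inst n"
  have t: "(0, 0) \<in> tasks ?I" using assms by (simp add: tasks_ex)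
  have "job_compl ?I st sp 0 \<le> (\<Sum>j<n. job_compl ?I st sp j)"
    by (rule member_le_sum) (use assms job_compl_nonneg in auto)
  moreover have "objective ?I st sp = (\<Sum>j<n. job_compl ?I st sp j)"
    unfolding objective_def by (simp add: ex_inst_def)
  ultimately show ?thesis using main_lb[OF assms] job_compl_ge[OF t, of st sp] by linarith
qed

lemma fcfs_lb:
  assumes "\<beta> > 1" "feasible \<beta> (ex_inst n) st sp" "0 < n"
    and "fcfs_order (ex_inst n) pos" "respects_order (ex_inst n) pos st sp"
  shows "real n - 1 \<le> objective (ex_inst n) st sp"
proof -
  let ?I = "ex_inst n"
  have each: "1 \<le> job_compl ?I st sp j" if j: "j \<in> {1..<n}" for j
  proof -
    have t: "(0, j) \<in> tasks ?I" "(0, 0) \<in> tasks ?I" using j assms by (auto simp: tasks_ex)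
    have "release ?I 0 < release ?I j" using j by (simp add: ex_inst_def)
    hence "pos 0 < pos j" using assms(4) j assms(3) unfolding fcfs_order_def
      by (simp add: ex_inst_def)
    hence "compl ?I st sp 0 0 \<le> st 0 j" using assms(5) t
      unfolding respects_order_def by blast
    moreover have "sp 0 j > 0" using assms(2) t unfolding feasible_def by auto
    moreover have "st 0 j \<le> compl ?I st sp 0 j"
      using calculation unfolding compl_def by (simp add: ex_inst_def)
    ultimately show ?thesis using main_lb[OF assms(1-3)] job_compl_ge[OF t(1), of st sp]
      by linarith
  qed
  have "real n - 1 = (\<Sum>j\<in>{1..<n}. (1::real))" using assms(3) by simp
  also have "\<dots> \<le> (\<Sum>j\<in>{1..<n}. job_compl ?I st sp j)" by (rule sum_mono) (rule each)
  also have "\<dots> \<le> (\<Sum>j<n. job_compl ?I st sp j)"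
    by (rule sum_mono2) (use assms job_compl_nonneg in auto)
  also have "\<dots> = objective ?I st sp"
    unfolding objective_def by (simp add: ex_inst_def)
  finally show ?thesis .
qed

definition stA :: "nat \<Rightarrow> nat \<Rightarrow> nat \<Rightarrow> real" where
  "stA n i j = (if j = 0 \<and> i = 1 then 1 / real n + 1 else 1 / real n)"

definition stB :: "nat \<Rightarrow> nat \<Rightarrow> real" where
  "stB i j = (if j = 0 \<and> i = 0 then 0 else 1)"

lemma energy_ex:
  assumes "0 < n"
  shows "energy \<beta> (ex_inst n) (\<lambda>i j. 1) = 1"
proof -
  have "energy \<beta> (ex_inst n) (\<lambda>i j. 1) = (\<Sum>x\<in>tasks (ex_inst n). if x = (0, 0) then 1 else 0)"
    unfolding energy_def by (rule sum.cong) (auto simp: ex_simps split: if_splits)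
  also have "\<dots> = 1" using assms by (simp add: tasks_ex finite_tasks)
  finally show ?thesis .
qed

lemma feasA:
  assumes "0 < n"
  shows "feasible \<beta> (ex_inst n) (stA n) (\<lambda>i j. 1)"
  unfolding feasible_def using assms
  by (auto simp: energy_ex tasks_ex compl_def stA_def ex_simps)

lemma objA:
  assumes "0 < n"
  shows "objective (ex_inst n) (stA n) (\<lambda>i j. 1) \<le> 2"
proof -
  let ?I = "ex_inst n"
  have "job_compl ?I (stA n) (\<lambda>i j. 1) j \<le> 1 / real n + (if j = 0 then 1 else 0)"
    if "j < n" for j
    by (rule job_compl_le[of 0]) (use that in \<open>auto simp: tasks_ex compl_def stA_def ex_simps\<close>)
  hence "objective ?I (stA n) (\<lambda>i j. 1) \<le> (\<Sum>j<n. 1 / real n + (if j = 0 then 1 else 0))"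
    unfolding objective_def ex_simps by (intro sum_mono) simp
  also have "\<dots> = 2" using assms by (simp add: sum.distrib)
  finally show ?thesis .
qed

lemma feasB:
  assumes "0 < n"
  shows "feasible \<beta> (ex_inst n) stB (\<lambda>i j. 1)"
  unfolding feasible_def using assms
  by (auto simp: energy_ex tasks_ex compl_def stB_def ex_simps)

lemma fcfsB:
  assumes "0 < n"
  shows "fcfs_order (ex_inst n) id \<and> respects_order (ex_inst n) id stB (\<lambda>i j. 1)"
  unfolding fcfs_order_def respects_order_def is_order_def using assms
  by (auto simp: tasks_ex compl_def stB_def ex_simps split: if_splits)

lemma valid_ex: "valid_inst (ex_inst n)"
  unfolding valid_inst_def by (auto simp: ex_simps tasks_ex)

lemma opt_bounds:
  assumes "\<beta> > 1" "0 < n"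
  shows "1 \<le> OPT \<beta> (ex_inst n)" "OPT \<beta> (ex_inst n) \<le> 2"
    "real n - 1 \<le> OPT_FCFS \<beta> (ex_inst n)"
proof -
  let ?S = "{objective (ex_inst n) st sp | st sp. feasible \<beta> (ex_inst n) st sp}"
  let ?F = "{objective (ex_inst n) st sp | st sp. feasible \<beta> (ex_inst n) st sp \<and>
       (\<exists>pos. fcfs_order (ex_inst n) pos \<and> respects_order (ex_inst n) pos st sp)}"
  have Sne: "objective (ex_inst n) (stA n) (\<lambda>i j. 1) \<in> ?S" using feasA[OF assms(2)] by blast
  have Fne: "objective (ex_inst n) stB (\<lambda>i j. 1) \<in> ?F" using feasB[OF assms(2)] fcfsB[OF assms(2)] by blast
  have Slb: "\<And>x. x \<in> ?S \<Longrightarrow> 1 \<le> x" using obj_lb[OF assms(1) _ assms(2)] by blast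
  have Flb: "\<And>x. x \<in> ?F \<Longrightarrow> real n - 1 \<le> x" using fcfs_lb[OF assms(1) _ assms(2)] by blast
  show "1 \<le> OPT \<beta> (ex_inst n)" unfolding OPT_def
    by (rule cInf_greatest) (use Sne Slb in auto)
  have "bdd_below ?S" using Slb by (intro bdd_belowI) blast
  hence "OPT \<beta> (ex_inst n) \<le> objective (ex_inst n) (stA n) (\<lambda>i j. 1)"
    unfolding OPT_def by (intro cInf_lower Sne)
  thus "OPT \<beta> (ex_inst n) \<le> 2" using objA[OF assms(2)] by linarith
  show "real n - 1 \<le> OPT_FCFS \<beta> (ex_inst n)" unfolding OPT_FCFS_def
    by (rule cInf_greatest) (use Fne Flb in auto)
qed

theorem proposition3:
  fixes \<beta> :: real
  assumes "\<beta> > 1"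
  shows "\<exists>(inst :: nat \<Rightarrow> mr_inst) (c :: real) (N :: nat). c > 0 \<and>
           (\<forall>n \<ge> 1. valid_inst (inst n) \<and> n_jobs (inst n) = n) \<and>
           (\<forall>n \<ge> N. OPT \<beta> (inst n) > 0 \<and>
                     OPT_FCFS \<beta> (inst n) / OPT \<beta> (inst n) \<ge> c * real n)"
proof (intro exI[of _ ex_inst] exI[of _ "1/4"] exI[of _ 2] conjI allI impI)
  show "(0::real) < 1/4" by simp
  fix n :: nat
  show "valid_inst (ex_inst n)" by (rule valid_ex)
  show "n_jobs (ex_inst n) = n" by (simp add: ex_simps)
next
  fix n :: nat assume n: "2 \<le> n"
  note b = opt_bounds[OF assms, of n]
  from n have b1: "1 \<le> OPT \<beta> (ex_inst n)" "OPT \<beta> (ex_inst n) \<le> 2"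
    "real n - 1 \<le> OPT_FCFS \<beta> (ex_inst n)" using b by auto
  show "0 < OPT \<beta> (ex_inst n)" using b1 by linarith
  have rn: "real n \<ge> 2" using n by simp
  have "1/4 * real n \<le> (real n - 1) / 2" using rn by simp
  also have "\<dots> \<le> OPT_FCFS \<beta> (ex_inst n) / 2" using b1 by simp
  also have "\<dots> \<le> OPT_FCFS \<beta> (ex_inst n) / OPT \<beta> (ex_inst n)"
    using b1 rn by (intro divide_left_mono) auto
  finally show "1/4 * real n \<le> OPT_FCFS \<beta> (ex_inst n) / OPT \<beta> (ex_inst n)" .
qed

end
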